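(* Let $h$ be a $K$-strongly convex penalty function on $\Delta$, let $p\in\Delta$, and let $\Delta_p=\{x\in\Delta:\operatorname{supp}(x)\supseteq\operatorname{supp}(p)\}$. Then: (i) $D_h(p,x)<+\infty$ whenever $x\in\Delta_p$; (ii) $D_h(p,x)\ge0$ for all $x\in\Delta$, with $D_h(p,x)=0$ if and only if $p=x$; in particular $D_h(p,x)\ge\tfrac12K\|x-p\|^2$ for all $x\in\Delta$; (iii) $D_h(p,x_j)\to D_h(p,x)$ whenever $x_j\to x$ in $\Delta_p$.
   Context: $\Delta$ is the unit simplex of $\mathbb{R}^n$. A $K$-strongly convex penalty function on $\Delta$ is $h:\Delta\to\mathbb{R}$ that is continuous, $C^\infty$ on the relative interior of every face of $\Delta$, and satisfies $h(tx_1+(1-t)x_2)\le th(x_1)+(1-t)h(x_2)-\tfrac12Kt(1-t)\|x_1-x_2\|^2$ for all $x_1,x_2\in\Delta$, $t\in[0,1]$. The Bregman divergence is $D_h(p,x)=h(p)-h(x)-h'(x;p-x)$ for $p,x\in\Delta$, where $h'(x;p-x)=\lim_{t\to0^+}t^{-1}[h(x+t(p-x))-h(x)]$ is the one-sided directional derivative (possibly $-\infty$, in which case $D_h(p,x)=+\infty$). *)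

theory Defs
  imports "HOL-Analysis.Analysis"
begin

definition unit_simplex :: "(real^'n) set" where
  "unit_simplex = {x. (\<forall>i. 0 \<le> x $ i) \<and> (\<Sum>i\<in>UNIV. x $ i) = 1}"

definition supp :: "real^'n \<Rightarrow> 'n set" where
  "supp x = {i. x $ i \<noteq> 0}"

definition face_relint :: "'n set \<Rightarrow> (real^'n) set" where
  "face_relint S = {x \<in> unit_simplex. supp x = S}"

definition Delta_p :: "real^'n \<Rightarrow> (real^'n) set" where
  "Delta_p p = {x \<in> unit_simplex. supp p \<subseteq> supp x}"

fun pderivs :: "'n list \<Rightarrow> (real^'n::finite \<Rightarrow> real) \<Rightarrow> (real^'n \<Rightarrow> real)" where
  "pderivs [] f = f"
| "pderivs (i # is) f = (\<lambda>x. deriv (\<lambda>t. pderivs is f (x + t *\<^sub>R axis i 1)) 0)"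

definition Cinf_on :: "(real^'n::finite) set \<Rightarrow> (real^'n \<Rightarrow> real) \<Rightarrow> bool" where
  "Cinf_on U f \<longleftrightarrow> open U \<and>
     (\<forall>is. continuous_on U (pderivs is f) \<and>
       (\<forall>i. \<forall>x\<in>U. (\<lambda>t. pderivs is f (x + t *\<^sub>R axis i 1)) differentiable (at 0)))"

text \<open>h is C-infinity on the relative interior of every face: on each relatively open face
  it agrees with a C-infinity function defined on an open neighbourhood in R^n.\<close>
definition smooth_on_faces :: "(real^'n::finite \<Rightarrow> real) \<Rightarrow> bool" where
  "smooth_on_faces h \<longleftrightarrow> (\<forall>S. S \<noteq> {} \<longrightarrow>
     (\<exists>U f. face_relint S \<subseteq> U \<and> Cinf_on U f \<and> (\<forall>x\<in>face_relint S. f x = h x)))"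

definition strongly_convex_penalty :: "real \<Rightarrow> (real^'n::finite \<Rightarrow> real) \<Rightarrow> bool" where
  "strongly_convex_penalty K h \<longleftrightarrow> 0 < K \<and> continuous_on unit_simplex h \<and> smooth_on_faces h \<and>
     (\<forall>x1\<in>unit_simplex. \<forall>x2\<in>unit_simplex. \<forall>t\<in>{0..1::real}.
        h (t *\<^sub>R x1 + (1 - t) *\<^sub>R x2) \<le> t * h x1 + (1 - t) * h x2
          - 1/2 * K * t * (1 - t) * (norm (x1 - x2))\<^sup>2)"

definition dir_deriv :: "(real^'n \<Rightarrow> real) \<Rightarrow> real^'n \<Rightarrow> real^'n \<Rightarrow> ereal" where
  "dir_deriv h x v = Lim (at_right 0) (\<lambda>t::real. ereal ((h (x + t *\<^sub>R v) - h x) / t))"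

text \<open>Bregman divergence; equals +infinity when the directional derivative is -infinity.\<close>
definition bregman :: "(real^'n \<Rightarrow> real) \<Rightarrow> real^'n \<Rightarrow> real^'n \<Rightarrow> ereal" where
  "bregman h p x = ereal (h p - h x) - dir_deriv h x (p - x)"

end

theory Submission
  imports Defs
begin

lemma pder_DERIV:
  fixes f :: "real^'n::finite \<Rightarrow> real"
  assumes C: "Cinf_on U f" and z: "w + s0 *\<^sub>R axis j (1::real) \<in> U"
  shows "((\<lambda>s. f (w + s *\<^sub>R axis j (1::real))) has_real_derivative pderivs [j] f (w + s0 *\<^sub>R axis j (1::real))) (at s0)"
proof -
  let ?z = "w + s0 *\<^sub>R axis j (1::real)"
  let ?\<psi> = "\<lambda>t. f (?z + t *\<^sub>R axis j (1::real))"
  have "\<forall>i. \<forall>x\<in>U. (\<lambda>t. pderivs [] f (x + t *\<^sub>R axis i 1)) differentiable (at 0)"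
    using C unfolding Cinf_on_def by blast
  then have "?\<psi> differentiable (at 0)" using z by simp
  then have d: "DERIV ?\<psi> 0 :> deriv ?\<psi> 0" by (simp only: DERIV_deriv_iff_real_differentiable)
  have e: "deriv ?\<psi> 0 = pderivs [j] f ?z" by (simp only: pderivs.simps)
  have "DERIV ?\<psi> (s0 + (- s0)) :> pderivs [j] f ?z" using d e by (simp only: add.right_inverse)
  then have "((\<lambda>s. ?\<psi> (s + (- s0))) has_real_derivative pderivs [j] f ?z) (at s0)"
    by (simp only: DERIV_shift)
  moreover have "(\<lambda>s. ?\<psi> (s + (- s0))) = (\<lambda>s. f (w + s *\<^sub>R axis j (1::real)))"
  proof (rule ext)
    fix s
    have "w + s0 *\<^sub>R axis j (1::real) + (s + - s0) *\<^sub>R axis j (1::real) = w + s *\<^sub>R axis j (1::real)"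
      proof -
        have q: "s0 + (s + - s0) = s" by simp
        show ?thesis by (simp only: add.assoc scaleR_add_left[symmetric] q)
      qed
    then show "?\<psi> (s + (- s0)) = f (w + s *\<^sub>R axis j (1::real))" by (simp only:)
  qed
  ultimately show ?thesis by (simp only:)
qed

lemma axis_step:
  fixes f :: "real^'n::finite \<Rightarrow> real"
  assumes C: "Cinf_on U f" and xU: "x \<in> U"
  shows "((\<lambda>t. (f (x + t *\<^sub>R v + (t * c) *\<^sub>R axis j (1::real)) - f (x + t *\<^sub>R v)) / t)
          \<longlongrightarrow> c * pderivs [j] f x) (at 0)"
proof (cases "c = 0")
  case True
  then show ?thesis by simp
next
  case False
  let ?g = "pderivs [j] f"
  have oU: "open U" using C unfolding Cinf_on_def by blast
  have "continuous_on U ?g" using C unfolding Cinf_on_def by blast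
  then have cg: "isCont ?g x" using oU xU continuous_on_eq_continuous_at by blast
  show ?thesis
  proof (rule tendstoI)
    fix e :: real assume e: "e > 0"
    have ec: "e / \<bar>c\<bar> > 0" using e False by simp
    obtain r where r: "r > 0" "\<And>z. dist z x < r \<Longrightarrow> dist (?g z) (?g x) < e / \<bar>c\<bar>"
      using cg ec unfolding continuous_at_eps_delta by blast
    obtain r0 where r0: "r0 > 0" "ball x r0 \<subseteq> U" using oU xU open_contains_ball by blast
    define r' where "r' = min r r0"
    have r'0: "r' > 0" using r r0 by (simp add: r'_def)
    define d where "d = r' / (norm v + \<bar>c\<bar> + 1)"
    have np: "norm v + \<bar>c\<bar> + 1 > 0" by (simp add: add_nonneg_pos)
    have d0: "d > 0" using r'0 np by (simp add: d_def)
    have P: "dist ((f (x + t *\<^sub>R v + (t * c) *\<^sub>R axis j (1::real)) - f (x + t *\<^sub>R v)) / t) (c * ?g x) < e"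
      if t0: "t \<noteq> 0" and td: "\<bar>t\<bar> < d" for t
    proof -
      define w where "w = x + t *\<^sub>R v"
      define \<phi> where "\<phi> = (\<lambda>s. f (w + s *\<^sub>R axis j (1::real)))"
      have close: "dist (w + s *\<^sub>R axis j (1::real)) x < r'" if "\<bar>s\<bar> \<le> \<bar>t * c\<bar>" for s
      proof -
        have "dist (w + s *\<^sub>R axis j (1::real)) x = norm (t *\<^sub>R v + s *\<^sub>R axis j (1::real))"
          by (simp add: w_def dist_norm)
        also have "\<dots> \<le> norm (t *\<^sub>R v) + norm (s *\<^sub>R axis j (1::real))" by (metis norm_triangle_ineq)
        also have "\<dots> = \<bar>t\<bar> * norm v + \<bar>s\<bar>" by simp
        also have "\<dots> \<le> \<bar>t\<bar> * (norm v + \<bar>c\<bar>)" using that by (simp add: algebra_simps abs_mult)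
        also have "\<dots> < d * (norm v + \<bar>c\<bar> + 1)"
        proof -
          have "\<bar>t\<bar> * (norm v + \<bar>c\<bar>) \<le> \<bar>t\<bar> * (norm v + \<bar>c\<bar> + 1)" by (intro mult_left_mono) auto
          also have "\<dots> < d * (norm v + \<bar>c\<bar> + 1)"
            using td np by (intro mult_strict_right_mono) auto
          finally show ?thesis .
        qed
        also have "\<dots> = r'" using np by (simp add: d_def)
        finally show ?thesis .
      qed
      have der: "(\<phi> has_real_derivative ?g (w + s *\<^sub>R axis j (1::real))) (at s)"
        if "\<bar>s\<bar> \<le> \<bar>t * c\<bar>" for s
      proof -
        have "w + s *\<^sub>R axis j (1::real) \<in> U" using close[OF that] r0 unfolding r'_def
          by (auto simp: dist_commute)
        then show ?thesis unfolding \<phi>_def by (rule pder_DERIV[OF C])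
      qed
      have "\<exists>z. \<bar>z\<bar> \<le> \<bar>t * c\<bar> \<and> \<phi> (t * c) - \<phi> 0 = (t * c) * ?g (w + z *\<^sub>R axis j (1::real))"
      proof (cases "t * c > 0")
        case True
        have "\<exists>z. 0 < z \<and> z < t * c \<and> \<phi> (t * c) - \<phi> 0 = (t * c - 0) * ?g (w + z *\<^sub>R axis j (1::real))"
          by (rule MVT2[OF True]) (rule der, insert True, auto simp del: abs_mult)
        then show ?thesis using True by force
      next
        case False
        then have n: "t * c < 0" using t0 \<open>c \<noteq> 0\<close> by (simp add: linorder_neq_iff) (metis mult_eq_0_iff linorder_neqE_linordered_idom)
        have "\<exists>z. t * c < z \<and> z < 0 \<and> \<phi> 0 - \<phi> (t * c) = (0 - t * c) * ?g (w + z *\<^sub>R axis j (1::real))"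
          by (rule MVT2[OF n]) (rule der, insert n, auto simp del: abs_mult)
        then obtain z where "t * c < z" "z < 0" "\<phi> 0 - \<phi> (t * c) = (0 - t * c) * ?g (w + z *\<^sub>R axis j (1::real))" by blast
        moreover have "\<bar>z\<bar> \<le> \<bar>t * c\<bar>" using calculation n by simp
        ultimately show ?thesis by (intro exI[of _ z]) (auto simp: algebra_simps)
      qed
      then obtain z where z: "\<bar>z\<bar> \<le> \<bar>t * c\<bar>" "\<phi> (t * c) - \<phi> 0 = (t * c) * ?g (w + z *\<^sub>R axis j (1::real))" by blast
      have q: "(f (x + t *\<^sub>R v + (t * c) *\<^sub>R axis j (1::real)) - f (x + t *\<^sub>R v)) / t = c * ?g (w + z *\<^sub>R axis j (1::real))"
        using z(2) t0 unfolding \<phi>_def w_def by (simp add: field_simps)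
      have "dist (?g (w + z *\<^sub>R axis j (1::real))) (?g x) < e / \<bar>c\<bar>"
        using r(2) close[OF z(1)] unfolding r'_def by simp
      then have "\<bar>c\<bar> * dist (?g (w + z *\<^sub>R axis j (1::real))) (?g x) < e"
        using False by (simp add: field_simps)
      then show ?thesis unfolding q by (simp add: dist_real_def abs_mult[symmetric] right_diff_distrib[symmetric])
    qed
    show "\<forall>\<^sub>F t in at 0. dist ((f (x + t *\<^sub>R v + (t * c) *\<^sub>R axis j (1::real)) - f (x + t *\<^sub>R v)) / t) (c * ?g x) < e"
      unfolding eventually_at using d0 P by (auto simp: dist_real_def)
  qed
qed

lemma dir_limit:
  fixes f :: "real^'n::finite \<Rightarrow> real"
  assumes C: "Cinf_on U f" and xU: "x \<in> U"
  shows "\<exists>L. ((\<lambda>t. (f (x + t *\<^sub>R d) - f x) / t) \<longlongrightarrow> L) (at 0)"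
proof -
  define dI where "dI I = (\<chi> i. if i \<in> I then d $ i else 0)" for I
  have "\<exists>L. ((\<lambda>t. (f (x + t *\<^sub>R dI I) - f x) / t) \<longlongrightarrow> L) (at 0)" if "finite I" for I
    using that
  proof (induction I rule: finite_induct)
    case empty
    have "dI {} = 0" by (simp add: dI_def vec_eq_iff)
    then show ?case by (intro exI[of _ 0]) simp
  next
    case (insert j I)
    then obtain L where L: "((\<lambda>t. (f (x + t *\<^sub>R dI I) - f x) / t) \<longlongrightarrow> L) (at 0)" by blast
    have eq: "dI (insert j I) = dI I + (d $ j) *\<^sub>R axis j (1::real)"
      using insert(2) by (auto simp: dI_def vec_eq_iff axis_def)
    have eq2: "(f (x + t *\<^sub>R dI (insert j I)) - f x) / t =
        (f (x + t *\<^sub>R dI I + (t * d $ j) *\<^sub>R axis j (1::real)) - f (x + t *\<^sub>R dI I)) / t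
        + (f (x + t *\<^sub>R dI I) - f x) / t" for t
    proof -
      have "x + t *\<^sub>R dI (insert j I) = x + t *\<^sub>R dI I + (t * d $ j) *\<^sub>R axis j (1::real)"
        unfolding eq by (simp add: scaleR_add_right add.assoc)
      then show ?thesis by (simp only: add_divide_distrib[symmetric]) (rule arg_cong[where f="\<lambda>z. z / t"], linarith)
    qed
    show ?case
      unfolding eq2 by (rule exI, rule tendsto_add[OF axis_step[OF C xU] L])
  qed
  from this[of UNIV] have "\<exists>L. ((\<lambda>t. (f (x + t *\<^sub>R dI UNIV) - f x) / t) \<longlongrightarrow> L) (at 0)" by simp
  moreover have "dI UNIV = d" by (simp add: dI_def vec_eq_iff)
  ultimately show ?thesis by simp
qed

definition Q :: "(real^'n \<Rightarrow> real) \<Rightarrow> real^'n \<Rightarrow> real^'n \<Rightarrow> real \<Rightarrow> real" where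
  "Q h x p t = (h (x + t *\<^sub>R (p - x)) - h x) / t"

lemma simplex_bounds:
  assumes "p \<in> unit_simplex" shows "0 \<le> p $ i" "p $ i \<le> 1"
proof -
  show "0 \<le> p $ i" using assms by (simp add: unit_simplex_def)
  have "p $ i \<le> (\<Sum>j\<in>UNIV. p $ j)"
    using assms by (intro member_le_sum) (auto simp: unit_simplex_def)
  then show "p $ i \<le> 1" using assms by (simp add: unit_simplex_def)
qed

lemma simplex_line:
  assumes x: "x \<in> unit_simplex" and p: "p \<in> unit_simplex"
    and nn: "\<And>i. 0 \<le> x $ i + t * (p $ i - x $ i)"
  shows "x + t *\<^sub>R (p - x) \<in> unit_simplex"
proof -
  have "(\<Sum>i\<in>UNIV. (x + t *\<^sub>R (p - x)) $ i) = (\<Sum>i\<in>UNIV. x $ i) + t * ((\<Sum>i\<in>UNIV. p $ i) - (\<Sum>i\<in>UNIV. x $ i))"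
    by (simp add: sum.distrib sum_distrib_left sum_subtractf algebra_simps)
  also have "\<dots> = 1" using x p by (simp add: unit_simplex_def)
  finally show ?thesis using nn by (simp add: unit_simplex_def algebra_simps)
qed

lemma simplex_seg:
  assumes x: "x \<in> unit_simplex" and p: "p \<in> unit_simplex" and t: "0 \<le> t" "t \<le> 1"
  shows "x + t *\<^sub>R (p - x) \<in> unit_simplex"
proof (rule simplex_line[OF x p])
  fix i
  have "0 \<le> (1 - t) * x $ i + t * p $ i"
    using t simplex_bounds[OF x, of i] simplex_bounds[OF p, of i] by simp
  then show "0 \<le> x $ i + t * (p $ i - x $ i)" by (simp add: algebra_simps)
qed

lemma conv3:
  assumes scp: "strongly_convex_penalty K h"
    and ab: "a < b" and bc: "b < c"
    and A: "x + a *\<^sub>R v \<in> unit_simplex" and Cc: "x + c *\<^sub>R v \<in> unit_simplex"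
  shows "(c - a) * h (x + b *\<^sub>R v) \<le> (c - b) * h (x + a *\<^sub>R v) + (b - a) * h (x + c *\<^sub>R v)"
proof -
  define l where "l = (c - b) / (c - a)"
  have l01: "0 \<le> l" "l \<le> 1" using ab bc by (auto simp: l_def field_simps)
  have ne: "c - a \<noteq> 0" using ab bc by simp
  have cl: "(c - a) * l = c - b" using ne by (simp add: l_def)
  have "(c - a) * (l * a + (1 - l) * c) = ((c - a) * l) * a + (c - a) * c - ((c - a) * l) * c"
    by (simp add: algebra_simps)
  also have "\<dots> = (c - b) * a + (c - a) * c - (c - b) * c" by (simp only: cl)
  also have "\<dots> = (c - a) * b" by (simp add: algebra_simps)
  finally have "l * a + (1 - l) * c = b" using ne by simp
  then have lb: "b = l * a + (1 - l) * c" by simp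
  have veq: "l *\<^sub>R (x + a *\<^sub>R v) + (1 - l) *\<^sub>R (x + c *\<^sub>R v) = x + b *\<^sub>R v"
    unfolding lb by (simp add: vec_eq_iff algebra_simps)
  have K: "K > 0" using scp by (simp add: strongly_convex_penalty_def)
  have "h (l *\<^sub>R (x + a *\<^sub>R v) + (1 - l) *\<^sub>R (x + c *\<^sub>R v)) \<le> l * h (x + a *\<^sub>R v) + (1 - l) * h (x + c *\<^sub>R v)
      - 1/2 * K * l * (1 - l) * (norm ((x + a *\<^sub>R v) - (x + c *\<^sub>R v)))\<^sup>2"
  proof -
    have lI: "l \<in> {0..1}" using l01 by simp
    have H: "\<forall>x1\<in>unit_simplex. \<forall>x2\<in>unit_simplex. \<forall>t\<in>{0..1::real}.
        h (t *\<^sub>R x1 + (1 - t) *\<^sub>R x2) \<le> t * h x1 + (1 - t) * h x2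
          - 1/2 * K * t * (1 - t) * (norm (x1 - x2))\<^sup>2"
      using scp unfolding strongly_convex_penalty_def by blast
    show ?thesis using bspec[OF bspec[OF bspec[OF H A] Cc] lI] .
  qed
  moreover have "0 \<le> 1/2 * K * l * (1 - l) * (norm ((x + a *\<^sub>R v) - (x + c *\<^sub>R v)))\<^sup>2"
    using K l01 by simp
  ultimately have "h (x + b *\<^sub>R v) \<le> l * h (x + a *\<^sub>R v) + (1 - l) * h (x + c *\<^sub>R v)"
    unfolding veq by linarith
  then have "(c - a) * h (x + b *\<^sub>R v) \<le> (c - a) * (l * h (x + a *\<^sub>R v) + (1 - l) * h (x + c *\<^sub>R v))"
    using ab bc by (intro mult_left_mono) auto
  also have "\<dots> = ((c - a) * l) * h (x + a *\<^sub>R v) + (c - a) * h (x + c *\<^sub>R v) - ((c - a) * l) * h (x + c *\<^sub>R v)"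
    by (simp add: algebra_simps)
  also have "\<dots> = (c - b) * h (x + a *\<^sub>R v) + (b - a) * h (x + c *\<^sub>R v)"
    unfolding cl by (simp add: algebra_simps)
  finally show ?thesis .
qed

lemma Q_mono_pos:
  assumes scp: "strongly_convex_penalty K h" and x: "x \<in> unit_simplex"
    and s: "0 < s" "s \<le> t" and T: "x + t *\<^sub>R (p - x) \<in> unit_simplex"
  shows "Q h x p s \<le> Q h x p t"
proof (cases "s = t")
  case False
  then have st: "s < t" using s by simp
  have "(t - 0) * h (x + s *\<^sub>R (p - x)) \<le> (t - s) * h (x + 0 *\<^sub>R (p - x)) + (s - 0) * h (x + t *\<^sub>R (p - x))"
    by (rule conv3[OF scp s(1) st]) (use x T in simp_all)
  then have "t * (h (x + s *\<^sub>R (p - x)) - h x) \<le> s * (h (x + t *\<^sub>R (p - x)) - h x)"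
    by (simp add: algebra_simps)
  then show ?thesis using s st unfolding Q_def by (simp add: field_simps)
qed simp

lemma Q_mono_neg:
  assumes scp: "strongly_convex_penalty K h" and x: "x \<in> unit_simplex"
    and s: "s < 0" "0 < t" and S: "x + s *\<^sub>R (p - x) \<in> unit_simplex"
    and T: "x + t *\<^sub>R (p - x) \<in> unit_simplex"
  shows "Q h x p s \<le> Q h x p t"
proof -
  have "(t - s) * h (x + 0 *\<^sub>R (p - x)) \<le> (t - 0) * h (x + s *\<^sub>R (p - x)) + (0 - s) * h (x + t *\<^sub>R (p - x))"
    by (rule conv3[OF scp s(1) s(2) S T])
  then have "t * (h x - h (x + s *\<^sub>R (p - x))) \<le> (- s) * (h (x + t *\<^sub>R (p - x)) - h x)"
    by (simp add: algebra_simps)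
  then show ?thesis using s unfolding Q_def by (simp add: field_simps)
qed

lemma dd_tendsto:
  assumes scp: "strongly_convex_penalty K h" and x: "x \<in> unit_simplex" and p: "p \<in> unit_simplex"
  shows "((\<lambda>t. ereal (Q h x p t)) \<longlongrightarrow> (INF t\<in>{0<..1}. ereal (Q h x p t))) (at_right 0)"
proof (rule order_tendstoI)
  let ?L = "INF t\<in>{0<..1}. ereal (Q h x p t)"
  fix a assume a: "a < ?L"
  have "a < ereal (Q h x p y)" if "0 < y" "y < 1" for y
  proof -
    have "?L \<le> ereal (Q h x p y)" using that by (intro INF_lower) auto
    then show ?thesis using a by simp
  qed
  then show "\<forall>\<^sub>F t in at_right 0. a < ereal (Q h x p t)"
    unfolding eventually_at_right_field by (intro exI[of _ 1]) auto
next
  let ?L = "INF t\<in>{0<..1}. ereal (Q h x p t)"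
  fix a assume a: "?L < a"
  then obtain t where t: "t \<in> {0<..1}" "ereal (Q h x p t) < a" by (auto simp: INF_less_iff)
  have "ereal (Q h x p y) < a" if "0 < y" "y < t" for y
  proof -
    have "Q h x p y \<le> Q h x p t"
      using t that by (intro Q_mono_pos[OF scp x]) (auto intro: simplex_seg[OF x p])
    then show ?thesis using t by (meson ereal_less_eq(3) order_le_less_trans)
  qed
  then show "\<forall>\<^sub>F y in at_right 0. ereal (Q h x p y) < a"
    unfolding eventually_at_right_field using t by (intro exI[of _ t]) auto
qed

lemma dd_eq:
  assumes scp: "strongly_convex_penalty K h" and x: "x \<in> unit_simplex" and p: "p \<in> unit_simplex"
  shows "dir_deriv h x (p - x) = (INF t\<in>{0<..1}. ereal (Q h x p t))"
proof -
  have e: "(\<lambda>t::real. ereal ((h (x + t *\<^sub>R (p - x)) - h x) / t)) = (\<lambda>t. ereal (Q h x p t))"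
    by (simp add: Q_def)
  show ?thesis unfolding dir_deriv_def e
    by (rule tendsto_Lim[OF trivial_limit_at_right_real dd_tendsto[OF scp x p]])
qed

lemma dd_le:
  assumes scp: "strongly_convex_penalty K h" and x: "x \<in> unit_simplex" and p: "p \<in> unit_simplex"
    and t: "0 < t" "t \<le> 1"
  shows "dir_deriv h x (p - x) \<le> ereal (Q h x p t)"
  unfolding dd_eq[OF scp x p] using t by (intro INF_lower) auto

lemma dd_ge:
  assumes scp: "strongly_convex_penalty K h" and x: "x \<in> unit_simplex" and p: "p \<in> unit_simplex"
    and s: "s < 0" and S: "x + s *\<^sub>R (p - x) \<in> unit_simplex"
  shows "ereal (Q h x p s) \<le> dir_deriv h x (p - x)"
  unfolding dd_eq[OF scp x p]
proof (rule INF_greatest)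
  fix t assume "t \<in> {0<..1::real}"
  then show "ereal (Q h x p s) \<le> ereal (Q h x p t)"
    using s S by (auto intro!: Q_mono_neg[OF scp x] simplex_seg[OF x p])
qed

lemma Q_strong:
  assumes scp: "strongly_convex_penalty K h" and x: "x \<in> unit_simplex" and p: "p \<in> unit_simplex"
    and t: "0 < t" "t \<le> 1"
  shows "Q h x p t \<le> h p - h x - 1/2 * K * (1 - t) * (norm (x - p))\<^sup>2"
proof -
  have H: "\<forall>x1\<in>unit_simplex. \<forall>x2\<in>unit_simplex. \<forall>t\<in>{0..1::real}.
        h (t *\<^sub>R x1 + (1 - t) *\<^sub>R x2) \<le> t * h x1 + (1 - t) * h x2
          - 1/2 * K * t * (1 - t) * (norm (x1 - x2))\<^sup>2"
    using scp unfolding strongly_convex_penalty_def by blast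
  have tI: "t \<in> {0..1}" using t by simp
  have "h (t *\<^sub>R p + (1 - t) *\<^sub>R x) \<le> t * h p + (1 - t) * h x - 1/2 * K * t * (1 - t) * (norm (p - x))\<^sup>2"
    using bspec[OF bspec[OF bspec[OF H p] x] tI] .
  moreover have "t *\<^sub>R p + (1 - t) *\<^sub>R x = x + t *\<^sub>R (p - x)" by (simp add: algebra_simps)
  moreover have "norm (p - x) = norm (x - p)" by (rule norm_minus_commute)
  ultimately have "h (x + t *\<^sub>R (p - x)) - h x \<le> t * (h p - h x - 1/2 * K * (1 - t) * (norm (x - p))\<^sup>2)"
    by (simp add: algebra_simps)
  then show ?thesis using t unfolding Q_def by (simp add: divide_le_eq mult.commute)
qed

lemma dd_strong:
  assumes scp: "strongly_convex_penalty K h" and x: "x \<in> unit_simplex" and p: "p \<in> unit_simplex"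
  shows "dir_deriv h x (p - x) \<le> ereal (h p - h x - 1/2 * K * (norm (x - p))\<^sup>2)"
proof -
  let ?N = "(norm (x - p))\<^sup>2"
  have lim: "((\<lambda>t. ereal (Q h x p t)) \<longlongrightarrow> dir_deriv h x (p - x)) (at_right 0)"
    unfolding dd_eq[OF scp x p] by (rule dd_tendsto[OF scp x p])
  have "((\<lambda>t. h p - h x - 1/2 * K * (1 - t) * ?N) \<longlongrightarrow> h p - h x - 1/2 * K * (1 - 0) * ?N) (at_right 0)"
    by (intro tendsto_intros)
  then have lim2: "((\<lambda>t. ereal (h p - h x - 1/2 * K * (1 - t) * ?N)) \<longlongrightarrow> ereal (h p - h x - 1/2 * K * ?N)) (at_right 0)"
    by (intro tendsto_ereal) simp
  have ev: "\<forall>\<^sub>F t in at_right 0. ereal (Q h x p t) \<le> ereal (h p - h x - 1/2 * K * (1 - t) * ?N)"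
    unfolding eventually_at_right_field
  proof (intro exI[of _ 1] conjI allI impI)
    fix y :: real assume "0 < y" "y < 1"
    then have "Q h x p y \<le> h p - h x - 1/2 * K * (1 - y) * ?N" by (intro Q_strong[OF scp x p]) auto
    then show "ereal (Q h x p y) \<le> ereal (h p - h x - 1/2 * K * (1 - y) * ?N)" by (simp only: ereal_less_eq(3))
  qed simp
  show ?thesis by (rule tendsto_le[OF trivial_limit_at_right_real lim2 lim ev])
qed


lemma supp_nonempty:
  assumes "x \<in> unit_simplex" shows "supp x \<noteq> {}"
proof
  assume "supp x = {}"
  then have "\<forall>i. x $ i = 0" by (auto simp: supp_def)
  then show False using assms by (simp add: unit_simplex_def)
qed

lemma back_ok:
  assumes p: "p \<in> unit_simplex" and y: "y \<in> unit_simplex" and d: "0 < \<delta>" "\<delta> \<le> s"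
    and s: "\<forall>i\<in>supp p. s \<le> y $ i"
  shows "y + (- \<delta>) *\<^sub>R (p - y) \<in> unit_simplex"
proof (rule simplex_line[OF y p])
  fix i
  have y0: "0 \<le> y $ i" and p0: "0 \<le> p $ i" and p1: "p $ i \<le> 1"
    using simplex_bounds[OF y] simplex_bounds[OF p] by auto
  show "0 \<le> y $ i + - \<delta> * (p $ i - y $ i)"
  proof (cases "p $ i = 0")
    case True then show ?thesis using y0 d by simp
  next
    case False
    then have "s \<le> y $ i" using s by (simp add: supp_def)
    moreover have "\<delta> * p $ i \<le> \<delta>" using p1 d by (simp add: mult_left_le)
    moreover have "0 \<le> \<delta> * y $ i" using d y0 by simp
    moreover have "y $ i + - \<delta> * (p $ i - y $ i) = y $ i - \<delta> * p $ i + \<delta> * y $ i"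
      by (simp add: algebra_simps)
    ultimately show ?thesis using d by linarith
  qed
qed

lemma Delta_margin:
  assumes p: "p \<in> unit_simplex" and x: "x \<in> Delta_p p"
  shows "\<exists>m>0. \<forall>i\<in>supp p. m \<le> x $ i"
proof -
  have xs: "x \<in> unit_simplex" and sub: "supp p \<subseteq> supp x" using x by (auto simp: Delta_p_def)
  let ?A = "(\<lambda>i. x $ i) ` supp p"
  have fin: "finite ?A" by simp
  have ne: "?A \<noteq> {}" using supp_nonempty[OF p] by simp
  have pos: "\<forall>a\<in>?A. 0 < a"
  proof
    fix a assume "a \<in> ?A"
    then obtain i where i: "i \<in> supp p" "a = x $ i" by blast
    then have "x $ i \<noteq> 0" using sub by (auto simp: supp_def)
    moreover have "0 \<le> x $ i" using simplex_bounds[OF xs] by simp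
    ultimately show "0 < a" using i by simp
  qed
  show ?thesis
    by (intro exI[of _ "Min ?A"]) (use fin ne pos Min_gr_iff in auto)
qed

lemma dd_real:
  assumes scp: "strongly_convex_penalty K h" and y: "y \<in> unit_simplex" and p: "p \<in> unit_simplex"
    and d: "0 < \<delta>" and B: "y + (- \<delta>) *\<^sub>R (p - y) \<in> unit_simplex"
  shows "dir_deriv h y (p - y) = ereal (real_of_ereal (dir_deriv h y (p - y)))"
proof -
  have l: "ereal (Q h y p (-\<delta>)) \<le> dir_deriv h y (p - y)"
    using d B by (intro dd_ge[OF scp y p]) auto
  have u: "dir_deriv h y (p - y) \<le> ereal (Q h y p 1)"
    by (intro dd_le[OF scp y p]) auto
  show ?thesis using l u by (cases "dir_deriv h y (p - y)") auto
qed

lemma dd_real_Delta: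
  assumes scp: "strongly_convex_penalty K h" and p: "p \<in> unit_simplex" and y: "y \<in> Delta_p p"
  shows "dir_deriv h y (p - y) = ereal (real_of_ereal (dir_deriv h y (p - y)))"
proof -
  have ys: "y \<in> unit_simplex" using y by (simp add: Delta_p_def)
  obtain m where m: "m > 0" "\<forall>i\<in>supp p. m \<le> y $ i" using Delta_margin[OF p y] by blast
  show ?thesis by (rule dd_real[OF scp ys p m(1) back_ok[OF p ys m(1) order_refl m(2)]])
qed

lemma left_limit:
  assumes scp: "strongly_convex_penalty K h" and p: "p \<in> unit_simplex" and x: "x \<in> Delta_p p"
    and l: "dir_deriv h x (p - x) = ereal l"
  shows "(Q h x p \<longlongrightarrow> l) (at 0)"
proof -
  have xs: "x \<in> unit_simplex" and sub: "supp p \<subseteq> supp x" using x by (auto simp: Delta_p_def)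
  define S where "S = supp x"
  have Sne: "S \<noteq> {}" using supp_nonempty[OF xs] by (simp add: S_def)
  have "smooth_on_faces h" using scp by (simp add: strongly_convex_penalty_def)
  then obtain U f where U: "face_relint S \<subseteq> U" "Cinf_on U f" "\<forall>z\<in>face_relint S. f z = h z"
    using Sne unfolding smooth_on_faces_def by blast
  have xF: "x \<in> face_relint S" using xs by (simp add: face_relint_def S_def)
  obtain L where L: "((\<lambda>t. (f (x + t *\<^sub>R (p - x)) - f x) / t) \<longlongrightarrow> L) (at 0)"
    using dir_limit[OF U(2)] xF U(1) by blast
  let ?A = "(\<lambda>i. x $ i) ` S"
  define m where "m = Min ?A"
  have fin: "finite ?A" by simp
  have ne: "?A \<noteq> {}" using Sne by simp
  have pos: "\<forall>a\<in>?A. 0 < a"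
  proof
    fix a assume "a \<in> ?A"
    then obtain i where i: "i \<in> S" "a = x $ i" by blast
    then have "x $ i \<noteq> 0" by (auto simp: supp_def S_def)
    moreover have "0 \<le> x $ i" using simplex_bounds[OF xs] by simp
    ultimately show "0 < a" using i by simp
  qed
  have m0: "m > 0" unfolding m_def using fin ne pos Min_gr_iff by blast
  have mle: "m \<le> x $ i" if "i \<in> S" for i unfolding m_def using fin that by (intro Min_le) auto
  have inF: "x + t *\<^sub>R (p - x) \<in> face_relint S" if t: "\<bar>t\<bar> < m" for t
  proof -
    have comp: "(x + t *\<^sub>R (p - x)) $ i = x $ i + t * (p $ i - x $ i)" for i by simp
    have pos_i: "0 < x $ i + t * (p $ i - x $ i)" if "i \<in> S" for i
    proof -
      have "\<bar>p $ i - x $ i\<bar> \<le> 1"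
        using simplex_bounds[OF xs, of i] simplex_bounds[OF p, of i] by linarith
      then have "\<bar>t\<bar> * \<bar>p $ i - x $ i\<bar> \<le> \<bar>t\<bar>" by (simp add: mult_left_le)
      then have "\<bar>t * (p $ i - x $ i)\<bar> < m" using t by (simp add: abs_mult)
      then show ?thesis using mle[OF that] by linarith
    qed
    have zero_i: "x $ i + t * (p $ i - x $ i) = 0" if "i \<notin> S" for i
    proof -
      have "x $ i = 0" using that by (simp add: S_def supp_def)
      moreover have "p $ i = 0" using that sub by (auto simp: S_def supp_def)
      ultimately show ?thesis by simp
    qed
    have nn: "0 \<le> x $ i + t * (p $ i - x $ i)" for i
      using pos_i[of i] zero_i[of i] by (cases "i \<in> S") auto
    have "x + t *\<^sub>R (p - x) \<in> unit_simplex" by (rule simplex_line[OF xs p nn])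
    moreover have "supp (x + t *\<^sub>R (p - x)) = S"
      using pos_i zero_i unfolding supp_def comp by force
    ultimately show ?thesis by (simp add: face_relint_def)
  qed
  have ev: "\<forall>\<^sub>F t in at 0. (f (x + t *\<^sub>R (p - x)) - f x) / t = Q h x p t"
    unfolding eventually_at
  proof (intro exI[of _ m] conjI ballI impI allI)
    fix t :: real assume "t \<noteq> 0 \<and> dist t 0 < m"
    then have "\<bar>t\<bar> < m" by simp
    then show "(f (x + t *\<^sub>R (p - x)) - f x) / t = Q h x p t"
      using U(3) inF xF by (simp add: Q_def)
  qed (use m0 in simp)
  have QL: "(Q h x p \<longlongrightarrow> L) (at 0)"
    using tendsto_cong[OF ev] L by simp
  then have "(Q h x p \<longlongrightarrow> L) (at_right 0)" by (simp add: filterlim_at_split)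
  then have "((\<lambda>t. ereal (Q h x p t)) \<longlongrightarrow> ereal L) (at_right 0)" by (rule tendsto_ereal)
  moreover have "((\<lambda>t. ereal (Q h x p t)) \<longlongrightarrow> ereal l) (at_right 0)"
    using dd_tendsto[OF scp xs p] dd_eq[OF scp xs p] l by simp
  ultimately have "ereal L = ereal l" using tendsto_unique[OF trivial_limit_at_right_real] by blast
  then show ?thesis using QL by simp
qed

theorem propositionC2:
  fixes h :: "real^'n::finite \<Rightarrow> real" and K :: real and p :: "real^'n"
  assumes "strongly_convex_penalty K h"
    and "p \<in> unit_simplex"
  shows "(\<forall>x\<in>Delta_p p. bregman h p x < \<infinity>)
    \<and> (\<forall>x\<in>unit_simplex. 0 \<le> bregman h p x \<and> (bregman h p x = 0 \<longleftrightarrow> p = x))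
    \<and> (\<forall>x\<in>unit_simplex. ereal (1/2 * K * (norm (x - p))\<^sup>2) \<le> bregman h p x)
    \<and> (\<forall>X x. (\<forall>j. X j \<in> Delta_p p) \<longrightarrow> x \<in> Delta_p p \<longrightarrow> X \<longlonglongrightarrow> x
          \<longrightarrow> (\<lambda>j. bregman h p (X j)) \<longlonglongrightarrow> bregman h p x)"
proof -
  note scp = assms(1) and p = assms(2)
  have K: "K > 0" using scp by (simp add: strongly_convex_penalty_def)
  have breg: "bregman h p y = ereal (h p - h y) - dir_deriv h y (p - y)" for y
    by (simp add: bregman_def)
  define ll where "ll y = real_of_ereal (dir_deriv h y (p - y))" for y
  have bregD: "bregman h p y = ereal (h p - h y - ll y)" if "y \<in> Delta_p p" for y
  proof -
    have e: "dir_deriv h y (p - y) = ereal (ll y)" unfolding ll_def by (rule dd_real_Delta[OF scp p that])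
    show ?thesis by (simp add: breg e)
  qed
  have P1: "\<forall>x\<in>Delta_p p. bregman h p x < \<infinity>" using bregD by simp
  have P3: "ereal (1/2 * K * (norm (x - p))\<^sup>2) \<le> bregman h p x" if x: "x \<in> unit_simplex" for x
  proof -
    have u: "dir_deriv h x (p - x) \<le> ereal (h p - h x - 1/2 * K * (norm (x - p))\<^sup>2)"
      by (rule dd_strong[OF scp x p])
    show ?thesis
    proof (cases "dir_deriv h x (p - x)")
      case (real r)
      then show ?thesis using u by (simp add: breg)
    next
      case PInf then show ?thesis using u by simp
    next
      case MInf then show ?thesis by (simp add: breg)
    qed
  qed
  have P2: "0 \<le> bregman h p x \<and> (bregman h p x = 0 \<longleftrightarrow> p = x)" if x: "x \<in> unit_simplex" for x
  proof -
    have "0 \<le> 1/2 * K * (norm (x - p))\<^sup>2" using K by simp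
    then have nn: "0 \<le> bregman h p x" using P3[OF x] by (metis ereal_less_eq(3) order_trans zero_ereal_def)
    have "bregman h p x = 0" if "p = x"
    proof -
      have "Q h x p t = 0" for t using that by (simp add: Q_def)
      then have "dir_deriv h x (p - x) = 0" unfolding dd_eq[OF scp x p] by (simp add: zero_ereal_def)
      then show ?thesis unfolding breg using that by (simp add: zero_ereal_def)
    qed
    moreover have "p = x" if b0: "bregman h p x = 0"
    proof -
      have "1/2 * K * (norm (x - p))\<^sup>2 \<le> 0" using P3[OF x] b0 by (simp add: zero_ereal_def)
      then have "(norm (x - p))\<^sup>2 \<le> 0" using K by (simp add: mult_le_0_iff)
      then show ?thesis by simp
    qed
    ultimately show ?thesis using nn by blast
  qed
  have P4: "(\<lambda>j. bregman h p (X j)) \<longlonglongrightarrow> bregman h p x"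
    if X: "\<forall>j. X j \<in> Delta_p p" and x: "x \<in> Delta_p p" and lim: "X \<longlonglongrightarrow> x" for X x
  proof -
    have xs: "x \<in> unit_simplex" using x by (simp add: Delta_p_def)
    have Xs: "X j \<in> unit_simplex" for j using X by (simp add: Delta_p_def)
    have hc: "continuous_on unit_simplex h" using scp by (simp add: strongly_convex_penalty_def)
    obtain m where m: "m > 0" "\<forall>i\<in>supp p. m \<le> x $ i" using Delta_margin[OF p x] by blast
    define s where "s = m / 2"
    have s0: "s > 0" using m by (simp add: s_def)
    have evs: "\<forall>\<^sub>F j in sequentially. \<forall>i\<in>supp p. s \<le> X j $ i"
    proof -
      have "\<forall>\<^sub>F j in sequentially. \<forall>i. i \<in> supp p \<longrightarrow> s < X j $ i"
      proof (rule eventually_all_finite)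
        fix i
        show "\<forall>\<^sub>F j in sequentially. i \<in> supp p \<longrightarrow> s < X j $ i"
        proof (cases "i \<in> supp p")
          case True
          then have "m \<le> x $ i" using m by blast
          then have "s < x $ i" using m(1) by (simp add: s_def)
          then have "\<forall>\<^sub>F j in sequentially. s < X j $ i"
            by (rule order_tendstoD(1)[OF tendsto_vec_nth[OF lim]])
          then show ?thesis by (rule eventually_mono) simp
        qed simp
      qed
      then show ?thesis by (rule eventually_mono) auto
    qed
    have lx: "dir_deriv h x (p - x) = ereal (ll x)" using dd_real_Delta[OF scp p x] by (simp add: ll_def)
    have lX: "dir_deriv h (X j) (p - X j) = ereal (ll (X j))" for j
      using dd_real_Delta[OF scp p X[rule_format, of j]] by (simp add: ll_def)
    have cX: "(\<lambda>j. h (X j)) \<longlonglongrightarrow> h x"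
      by (rule continuous_on_tendsto_compose[OF hc lim xs]) (simp add: Xs)
    have QL: "(Q h x p \<longlongrightarrow> ll x) (at 0)" by (rule left_limit[OF scp p x lx])
    have llim: "(\<lambda>j. ll (X j)) \<longlonglongrightarrow> ll x"
    proof (rule tendstoI)
      fix e :: real assume e: "e > 0"
      have "\<forall>\<^sub>F t in at 0. dist (Q h x p t) (ll x) < e / 2"
        using tendstoD[OF QL, of "e / 2"] e by linarith
      then obtain r where r: "r > 0" "\<And>t. t \<noteq> 0 \<Longrightarrow> dist t 0 < r \<Longrightarrow> dist (Q h x p t) (ll x) < e / 2"
        unfolding eventually_at by auto
      define \<delta> where "\<delta> = min (r / 2) (min s 1)"
      have d0: "\<delta> > 0" using r s0 by (simp add: \<delta>_def)
      have d1: "\<delta> \<le> 1" "\<delta> \<le> s" "\<delta> < r" using r by (auto simp: \<delta>_def)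
      have "dist (Q h x p \<delta>) (ll x) < e / 2" using r(2)[of \<delta>] d0 d1 by simp
      then have qp: "Q h x p \<delta> < ll x + e / 2"
        unfolding dist_real_def by (simp only: abs_less_iff) linarith
      have "dist (Q h x p (- \<delta>)) (ll x) < e / 2" using r(2)[of "- \<delta>"] d0 d1 by simp
      then have qn: "ll x - e / 2 < Q h x p (- \<delta>)"
        unfolding dist_real_def by (simp only: abs_less_iff) linarith
      have Bx: "x + (- \<delta>) *\<^sub>R (p - x) \<in> unit_simplex"
        using back_ok[OF p xs d0 _ m(2)] d1 s0 m(1) by (simp add: s_def)
      have Fx: "x + \<delta> *\<^sub>R (p - x) \<in> unit_simplex" using simplex_seg[OF xs p] d0 d1 by simp
      have evB: "\<forall>\<^sub>F j in sequentially. X j + (- \<delta>) *\<^sub>R (p - X j) \<in> unit_simplex"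
        using evs by (rule eventually_mono) (rule back_ok[OF p Xs d0 d1(2)])
      have cF: "(\<lambda>j. h (X j + \<delta> *\<^sub>R (p - X j))) \<longlonglongrightarrow> h (x + \<delta> *\<^sub>R (p - x))"
      proof (rule continuous_on_tendsto_compose[OF hc _ Fx])
        show "(\<lambda>j. X j + \<delta> *\<^sub>R (p - X j)) \<longlonglongrightarrow> x + \<delta> *\<^sub>R (p - x)"
          by (intro tendsto_intros lim)
        have "X j + \<delta> *\<^sub>R (p - X j) \<in> unit_simplex" for j
          using simplex_seg[OF Xs p] d0 d1 by simp
        then show "\<forall>\<^sub>F j in sequentially. X j + \<delta> *\<^sub>R (p - X j) \<in> unit_simplex" by simp
      qed
      have cB: "(\<lambda>j. h (X j + (- \<delta>) *\<^sub>R (p - X j))) \<longlonglongrightarrow> h (x + (- \<delta>) *\<^sub>R (p - x))"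
        by (rule continuous_on_tendsto_compose[OF hc _ Bx evB]) (auto intro!: tendsto_intros lim)
      have QF: "(\<lambda>j. Q h (X j) p \<delta>) \<longlonglongrightarrow> Q h x p \<delta>"
        unfolding Q_def by (intro tendsto_intros cF cX) (use d0 in simp)
      have QB: "(\<lambda>j. Q h (X j) p (- \<delta>)) \<longlonglongrightarrow> Q h x p (- \<delta>)"
        unfolding Q_def by (intro tendsto_intros cB cX) (use d0 in simp)
      have e1: "\<forall>\<^sub>F j in sequentially. Q h (X j) p \<delta> < ll x + e / 2 + e / 2"
        using order_tendstoD(2)[OF QF, of "Q h x p \<delta> + e / 2"] e qp
        by (auto elim: eventually_mono)
      have e2: "\<forall>\<^sub>F j in sequentially. ll x - e / 2 - e / 2 < Q h (X j) p (- \<delta>)"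
        using order_tendstoD(1)[OF QB, of "Q h x p (- \<delta>) - e / 2"] e qn
        by (auto elim: eventually_mono)
      show "\<forall>\<^sub>F j in sequentially. dist (ll (X j)) (ll x) < e"
        using eventually_conj[OF eventually_conj[OF e1 e2] evB]
      proof (rule eventually_mono)
        fix j assume a: "(Q h (X j) p \<delta> < ll x + e / 2 + e / 2 \<and> ll x - e / 2 - e / 2 < Q h (X j) p (- \<delta>))
          \<and> X j + (- \<delta>) *\<^sub>R (p - X j) \<in> unit_simplex"
        have u: "ll (X j) \<le> Q h (X j) p \<delta>"
          using dd_le[OF scp Xs[of j] p d0 d1(1)] lX[of j] by simp
        have l: "Q h (X j) p (- \<delta>) \<le> ll (X j)"
          using dd_ge[OF scp Xs[of j] p _ conjunct2[OF a]] d0 lX[of j] by simp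
        show "dist (ll (X j)) (ll x) < e"
          using a u l by (simp add: dist_real_def abs_less_iff)
      qed
    qed
    have "(\<lambda>j. ereal (h p - h (X j) - ll (X j))) \<longlonglongrightarrow> ereal (h p - h x - ll x)"
      by (intro tendsto_ereal tendsto_diff tendsto_const cX llim)
    moreover have "(\<lambda>j. bregman h p (X j)) = (\<lambda>j. ereal (h p - h (X j) - ll (X j)))"
      using bregD X by blast
    moreover have "bregman h p x = ereal (h p - h x - ll x)" using bregD x by blast
    ultimately show ?thesis by (simp only:)
  qed
  show ?thesis
    apply (intro conjI)
       apply (rule P1)
      apply (intro ballI, erule P2)
     apply (intro ballI, erule P3)
    apply (intro allI impI, erule (2) P4)
    done
qed

end
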